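(* Let $k, \ell \in \mathbb{N}$ and let $T$ be a tournament on vertex set $V=Q_1\,\dot{\cup}\,\dots\, \dot{\cup}\, Q_\ell$ (a disjoint union), with $|Q_j|\geq k+1$ for all $j\in \{1,\dots ,\ell\}$. Suppose that for each $j\in \{1,\dots ,\ell\}$, $T[Q_j]$ is a backwards-transitive path. Then there exist sets $U, W, U', W'$ such that: (a) $U\subseteq U'\subseteq V(T)$ and $W\subseteq W'\subseteq V(T)$; (b) $|U|,|W|\leq 2k(k+1)$ and $|U'|=|W'|= \ell(k+1)$; (c) for any set $S\subseteq V(T)$ of size at most $k-1$ and every vertex $v\in V(T)\setminus S$, there exists a directed path (possibly of length $0$) in $T[(U'\cup \{v\})\setminus S]$ from $v$ to a vertex in $U$, and a directed path (possibly of length $0$) in $T[(W'\cup \{v\})\setminus S]$ from a vertex in $W$ to $v$.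
   Context: A tournament is an orientation of a complete graph; $T[U]$ denotes the subtournament induced by $U$. A non-empty tournament $Q$ is a backwards-transitive path if its vertices can be enumerated $q_1,\dots, q_{|Q|}$ such that there is an edge from $q_i$ to $q_j$ if and only if either $j=i+1$ or $i\geq j+2$. *)

theory Defs
  imports Main
begin

definition tournament :: "'a set \<Rightarrow> ('a \<Rightarrow> 'a \<Rightarrow> bool) \<Rightarrow> bool" where
  "tournament V E \<longleftrightarrow>
     (\<forall>x y. E x y \<longrightarrow> x \<in> V \<and> y \<in> V) \<and>
     (\<forall>x\<in>V. \<not> E x x) \<and>
     (\<forall>x\<in>V. \<forall>y\<in>V. x \<noteq> y \<longrightarrow> (E x y \<longleftrightarrow> \<not> E y x))"

text \<open>The induced subtournament on Q is a backwards-transitive path: Q is non-empty and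
  its vertices can be enumerated q_1,...,q_|Q| (here 0-indexed) with an edge q_i -> q_j
  iff j = i+1 or i >= j+2.\<close>
definition bt_path :: "('a \<Rightarrow> 'a \<Rightarrow> bool) \<Rightarrow> 'a set \<Rightarrow> bool" where
  "bt_path E Q \<longleftrightarrow> Q \<noteq> {} \<and>
     (\<exists>qs. distinct qs \<and> set qs = Q \<and>
        (\<forall>i < length qs. \<forall>j < length qs.
           E (qs ! i) (qs ! j) \<longleftrightarrow> (j = i + 1 \<or> i \<ge> j + 2)))"

text \<open>A directed path (possibly of length 0, i.e. a single vertex) in the induced
  subtournament on X, given as its list of vertices.\<close>
definition dpath :: "('a \<Rightarrow> 'a \<Rightarrow> bool) \<Rightarrow> 'a set \<Rightarrow> 'a list \<Rightarrow> bool" where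
  "dpath E X xs \<longleftrightarrow> xs \<noteq> [] \<and> distinct xs \<and> set xs \<subseteq> X \<and>
     (\<forall>i. i + 1 < length xs \<longrightarrow> E (xs ! i) (xs ! (i + 1)))"

end

theory Submission
  imports Defs
begin

lemma dpath_single: "x \<in> X \<Longrightarrow> dpath E X [x]"
  unfolding dpath_def by auto

lemma dpath_mono: "dpath E X xs \<Longrightarrow> X \<subseteq> Y \<Longrightarrow> dpath E Y xs"
  unfolding dpath_def by auto

lemma dpath_Cons:
  assumes "dpath E X xs" "x \<in> X" "x \<notin> set xs" "E x (hd xs)"
  shows "dpath E X (x # xs)"
  unfolding dpath_def
proof (intro conjI allI impI)
  show "x # xs \<noteq> []" by simp
  show "distinct (x # xs)" using assms unfolding dpath_def by auto
  show "set (x # xs) \<subseteq> X" using assms unfolding dpath_def by auto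
  fix i assume i: "i + 1 < length (x # xs)"
  show "E ((x # xs) ! i) ((x # xs) ! (i + 1))"
  proof (cases i)
    case 0
    then show ?thesis using assms unfolding dpath_def by (auto simp: hd_conv_nth)
  next
    case (Suc j)
    then show ?thesis using assms i unfolding dpath_def by auto
  qed
qed

lemma dpath_drop:
  assumes "dpath E X xs" "i < length xs"
  shows "dpath E X (drop i xs)"
  using assms unfolding dpath_def
  by (auto dest: in_set_dropD simp: add.assoc)

lemma dpath_rev:
  assumes "dpath (\<lambda>x y. E y x) X xs"
  shows "dpath E X (rev xs)"
  unfolding dpath_def
proof (intro conjI allI impI)
  show "rev xs \<noteq> []" "distinct (rev xs)" "set (rev xs) \<subseteq> X"
    using assms unfolding dpath_def by auto
  fix i assume i: "i + 1 < length (rev xs)"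
  define j where "j = length xs - 2 - i"
  have j: "j + 1 < length xs" using i by (simp add: j_def)
  have "E (xs ! (j + 1)) (xs ! j)" using assms j unfolding dpath_def by blast
  moreover have "length xs - Suc i = j + 1" "length xs - Suc (Suc i) = j" using i by (auto simp: j_def)
  ultimately show "E (rev xs ! i) (rev xs ! (i + 1))"
    using i by (simp add: rev_nth)
qed

lemma reach_path:
  assumes "(\<lambda>x y. E x y \<and> x \<in> X \<and> y \<in> X)\<^sup>*\<^sup>* a b" "a \<in> X"
  shows "\<exists>xs. dpath E X xs \<and> hd xs = a \<and> last xs = b"
  using assms
proof (induction rule: converse_rtranclp_induct)
  case base
  then show ?case by (intro exI[of _ "[b]"]) (auto intro: dpath_single)
next
  case (step a a')
  then obtain p where p: "dpath E X p" "hd p = a'" "last p = b" by auto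
  have ne: "p \<noteq> []" using p unfolding dpath_def by auto
  show ?case
  proof (cases "a \<in> set p")
    case True
    then obtain i where i: "i < length p" "p ! i = a" by (auto simp: in_set_conv_nth)
    show ?thesis using dpath_drop[OF p(1) i(1)] i p
      by (intro exI[of _ "drop i p"]) (auto simp: hd_drop_conv_nth)
  next
    case False
    then show ?thesis using dpath_Cons[OF p(1), of a] ne step p
      by (intro exI[of _ "a # p"]) auto
  qed
qed

lemma tour_sum:
  assumes "tournament V E" "A \<subseteq> V" "finite A"
  shows "2 * (\<Sum>x\<in>A. card {y\<in>A. E y x}) = card A * (card A - 1)"
proof -
  let ?P = "Sigma A (\<lambda>x. {y\<in>A. E y x})"
  let ?Q = "Sigma A (\<lambda>x. {y\<in>A. E x y})"
  have t: "\<And>x y. x \<in> A \<Longrightarrow> y \<in> A \<Longrightarrow> x \<noteq> y \<Longrightarrow> E x y \<longleftrightarrow> \<not> E y x"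
    and irr: "\<And>x. x \<in> A \<Longrightarrow> \<not> E x x" using assms unfolding tournament_def by blast+
  have cP: "card ?P = (\<Sum>x\<in>A. card {y\<in>A. E y x})" using assms(3) by simp
  have "?Q = (\<lambda>(x,y). (y,x)) ` ?P" by auto
  moreover have "inj_on (\<lambda>(x,y). (y,x)) ?P" by (auto simp: inj_on_def)
  ultimately have cQ: "card ?Q = card ?P" by (simp add: card_image)
  have un: "?P \<union> ?Q = Sigma A (\<lambda>x. A - {x})" using t irr by blast
  have dj: "?P \<inter> ?Q = {}" using t irr by blast
  have "card (Sigma A (\<lambda>x. A - {x})) = (\<Sum>x\<in>A. card (A - {x}))" using assms(3) by simp
  also have "\<dots> = card A * (card A - 1)" by simp
  finally have "card (?P \<union> ?Q) = card A * (card A - 1)" using un by simp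
  moreover have "card (?P \<union> ?Q) = card ?P + card ?Q"
    using dj assms(3) by (intro card_Un_disjoint) auto
  ultimately show ?thesis using cP cQ by simp
qed

lemma top_subset:
  fixes f :: "'a \<Rightarrow> nat"
  assumes "finite A" "d \<le> card A"
  shows "\<exists>U\<subseteq>A. card U = d \<and> (\<forall>x\<in>A - U. \<forall>u\<in>U. f x \<le> f u)"
  using assms(2)
proof (induction d)
  case 0 then show ?case by (intro exI[of _ "{}"]) auto
next
  case (Suc d)
  then obtain U where U: "U \<subseteq> A" "card U = d" "\<forall>x\<in>A - U. \<forall>u\<in>U. f x \<le> f u" by auto
  have fU: "finite U" using U(1) assms(1) finite_subset by blast
  have "A - U \<noteq> {}"
  proof
    assume "A - U = {}"
    then have "A \<subseteq> U" by auto
    then have "card A \<le> card U" using fU card_mono by blast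
    then show False using U Suc.prems by simp
  qed
  then have ne: "f ` (A - U) \<noteq> {}" by simp
  have fin: "finite (f ` (A - U))" using assms(1) by simp
  obtain m where m: "m \<in> A - U" "f m = Max (f ` (A - U))" using Max_in[OF fin ne] by auto
  have mx: "\<forall>x\<in>A - U. f x \<le> f m" using m fin by simp
  show ?case
  proof (intro exI[of _ "insert m U"] conjI)
    show "insert m U \<subseteq> A" using m U by auto
    show "card (insert m U) = Suc d" using m U fU by simp
    show "\<forall>x\<in>A - insert m U. \<forall>u\<in>insert m U. f x \<le> f u" using mx U(3) m by auto
  qed
qed


lemma key:
  fixes E :: "'a \<Rightarrow> 'a \<Rightarrow> bool"
  assumes tour: "tournament V E" and finV: "finite V"
    and U'V: "U' \<subseteq> V" and UU': "U \<subseteq> U'"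
    and cU: "card U = min (card U') (4*k)"
    and top: "\<forall>x\<in>U' - U. \<forall>u\<in>U. card {y\<in>U'. E y x} \<le> card {y\<in>U'. E y u}"
    and SV: "S \<subseteq> V" and cS: "card S + 1 \<le> k"
    and a: "a \<in> U' - S"
  shows "\<exists>b\<in>U. (\<lambda>x y. E x y \<and> x \<in> U' - S \<and> y \<in> U' - S)\<^sup>*\<^sup>* a b"
proof (rule ccontr)
  assume nb: "\<not> ?thesis"
  define R where "R = (\<lambda>x y. E x y \<and> x \<in> U' - S \<and> y \<in> U' - S)"
  define X where "X = U' - S"
  define C where "C = {y. R\<^sup>*\<^sup>* a y}"
  define N where "N = card U'"
  define f where "f = (\<lambda>x. card {y\<in>U'. E y x})"
  have t: "\<And>x y. x \<in> V \<Longrightarrow> y \<in> V \<Longrightarrow> x \<noteq> y \<Longrightarrow> E x y \<longleftrightarrow> \<not> E y x"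
    and irr: "\<And>x. x \<in> V \<Longrightarrow> \<not> E x x" using tour unfolding tournament_def by blast+
  have finU': "finite U'" using finV U'V finite_subset by blast
  have finS: "finite S" using finV SV finite_subset by blast
  have CX: "C \<subseteq> X"
  proof
    fix y assume "y \<in> C"
    then have "R\<^sup>*\<^sup>* a y" by (simp add: C_def)
    then show "y \<in> X" using a by (induction rule: rtranclp_induct) (auto simp: R_def X_def)
  qed
  have aC: "a \<in> C" by (simp add: C_def)
  have CU: "C \<inter> U = {}" using nb by (auto simp: C_def R_def)
  have closed: "E y x" if xC: "x \<in> C" and y: "y \<in> X - C" for x y
  proof -
    have "\<not> E x y"
    proof
      assume "E x y"
      then have "R x y" using CX xC y by (auto simp: R_def X_def)
      then have "R\<^sup>*\<^sup>* a y" using xC by (auto simp: C_def)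
      then show False using y by (simp add: C_def)
    qed
    moreover have "x \<noteq> y" using xC y by auto
    moreover have "x \<in> V" "y \<in> V" using xC y CX U'V by (auto simp: X_def)
    ultimately show "E y x" using t by blast
  qed
  have finX: "finite X" using finU' by (simp add: X_def)
  have finC: "finite C" using CX finX finite_subset by blast
  define c where "c = card C"
  have "C \<noteq> {}" using aC by blast
  then have c1: "c \<ge> 1" using finC unfolding c_def by (simp add: Suc_le_eq card_gt_0_iff)
  have "a \<notin> U" using CU aC by blast
  moreover have "a \<in> U'" using a by blast
  ultimately have "U \<subset> U'" using UU' by blast
  then have "card U < N" unfolding N_def using finU' by (rule psubset_card_mono[rotated])
  then have dk: "card U = 4*k" using cU N_def by auto
  define d where "d = card U"
  have finU: "finite U" using UU' finU' finite_subset by blast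
  have "card S < card U" using cS dk by simp
  then have "\<not> U \<subseteq> S" using card_mono[OF finS, of U] by linarith
  then obtain u where u: "u \<in> U" "u \<notin> S" by auto
  have uXC: "u \<in> X - C" using u UU' CU by (auto simp: X_def)
  have avg: "2 * (\<Sum>x\<in>C. card {y\<in>C. E y x}) = c * (c - 1)"
    using tour_sum[OF tour _ finC] CX U'V by (auto simp: X_def c_def)
  have "\<exists>x0\<in>C. c \<le> 2 * card {y\<in>C. E y x0} + 1"
  proof (rule ccontr)
    assume "\<not> ?thesis"
    then have "\<forall>x\<in>C. 2 * card {y\<in>C. E y x} + 2 \<le> c" by auto
    then have "(\<Sum>x\<in>C. 2 * card {y\<in>C. E y x} + 2) \<le> (\<Sum>x\<in>C. c)" by (intro sum_mono) auto
    moreover have "(\<Sum>x\<in>C. 2 * card {y\<in>C. E y x} + 2) = 2 * (\<Sum>x\<in>C. card {y\<in>C. E y x}) + 2 * c"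
      unfolding sum.distrib sum_distrib_left[symmetric] by (simp add: c_def)
    moreover have "(\<Sum>x\<in>C. c) = c * c" by (simp add: c_def)
    ultimately have "2 * (\<Sum>x\<in>C. card {y\<in>C. E y x}) + 2 * c \<le> c * c" by linarith
    then have "c * (c - 1) + 2 * c \<le> c * c" using avg by simp
    moreover have "c * (c - 1) + 2 * c = c * c + c" using c1
      by (cases c) (auto simp: algebra_simps)
    ultimately show False using c1 by simp
  qed
  then obtain x0 where x0: "x0 \<in> C" "c \<le> 2 * card {y\<in>C. E y x0} + 1" by auto
  have F1: "card (X - C) + card {y\<in>C. E y x0} \<le> f x0"
  proof -
    have "(X - C) \<union> {y\<in>C. E y x0} \<subseteq> {y\<in>U'. E y x0}"
      using closed[OF x0(1)] CX by (auto simp: X_def)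
    then have "card ((X - C) \<union> {y\<in>C. E y x0}) \<le> f x0"
      unfolding f_def using finU' by (intro card_mono) auto
    moreover have "card ((X - C) \<union> {y\<in>C. E y x0}) = card (X - C) + card {y\<in>C. E y x0}"
      using finX finC by (intro card_Un_disjoint) auto
    ultimately show ?thesis by simp
  qed
  have cXC: "card (X - C) = card X - c" using CX finC by (simp add: card_Diff_subset c_def)
  have cX: "N - card S \<le> card X" unfolding X_def N_def using finS by (rule diff_card_le_card_Diff)
  have cCX: "c \<le> card X" using CX finX card_mono c_def by blast
  have F2: "f u + (c + 1) \<le> N"
  proof -
    have "{y\<in>U'. E y u} \<inter> insert u C = {}"
    proof -
      have "\<not> E y u" if "y \<in> C" for y
        using closed[OF that uXC] t[of u y] that uXC CX U'V by (auto simp: X_def)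
      moreover have "\<not> E u u" using irr uXC U'V by (auto simp: X_def)
      ultimately show ?thesis by auto
    qed
    moreover have "{y\<in>U'. E y u} \<union> insert u C \<subseteq> U'" using uXC CX by (auto simp: X_def)
    ultimately have "card {y\<in>U'. E y u} + card (insert u C) \<le> N"
    proof -
      assume dj: "{y\<in>U'. E y u} \<inter> insert u C = {}" and sb: "{y\<in>U'. E y u} \<union> insert u C \<subseteq> U'"
      have "card ({y\<in>U'. E y u} \<union> insert u C) = card {y\<in>U'. E y u} + card (insert u C)"
        using dj finU' finC by (intro card_Un_disjoint) auto
      moreover have "card ({y\<in>U'. E y u} \<union> insert u C) \<le> N"
        unfolding N_def using sb finU' by (rule card_mono[rotated])
      ultimately show ?thesis by simp
    qed
    moreover have "card (insert u C) = c + 1" using uXC finC c_def by simp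
    ultimately show ?thesis by (simp add: f_def)
  qed
  have x0U: "x0 \<in> U' - U" using x0(1) CX CU by (auto simp: X_def)
  have F3: "f x0 \<le> f u" using top x0U u(1) by (simp add: f_def)
  have F4: "d * f x0 \<le> (\<Sum>v\<in>U. f v)"
  proof -
    have "(\<Sum>v\<in>U. f x0) \<le> (\<Sum>v\<in>U. f v)" using top x0U by (intro sum_mono) (simp add: f_def)
    then show ?thesis by (simp add: d_def)
  qed
  have F5: "2 * (\<Sum>v\<in>U. f v) \<le> d * (d - 1) + 2 * (d * (N - d))"
  proof -
    have split: "f v \<le> card {y\<in>U. E y v} + (N - d)" if "v \<in> U" for v
    proof -
      have "{y\<in>U'. E y v} = {y\<in>U. E y v} \<union> {y\<in>U' - U. E y v}" using UU' by auto
      then have "f v \<le> card {y\<in>U. E y v} + card {y\<in>U' - U. E y v}"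
        unfolding f_def by (metis card_Un_le)
      moreover have "card {y\<in>U' - U. E y v} \<le> card (U' - U)"
        using finU' by (intro card_mono) auto
      moreover have "card (U' - U) = N - d" using UU' finU by (simp add: card_Diff_subset N_def d_def)
      ultimately show ?thesis by simp
    qed
    have "(\<Sum>v\<in>U. f v) \<le> (\<Sum>v\<in>U. card {y\<in>U. E y v} + (N - d))" by (intro sum_mono split)
    also have "\<dots> = (\<Sum>v\<in>U. card {y\<in>U. E y v}) + d * (N - d)" by (simp add: sum.distrib d_def)
    finally have "2 * (\<Sum>v\<in>U. f v) \<le> 2 * (\<Sum>v\<in>U. card {y\<in>U. E y v}) + 2 * (d * (N - d))" by simp
    also have "2 * (\<Sum>v\<in>U. card {y\<in>U. E y v}) = d * (d - 1)"
      using tour_sum[OF tour _ finU] UU' U'V d_def by auto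
    finally show ?thesis .
  qed
  have dpos: "d > 0" using dk d_def \<open>card S < card U\<close> by simp
  have e: "d * (d - 1 + 2 * (N - d)) = d * (d - 1) + 2 * (d * (N - d))"
    by (simp add: distrib_left mult.left_commute)
  have "d * (2 * f x0) = 2 * (d * f x0)" by simp
  then have "d * (2 * f x0) \<le> d * (d - 1 + 2 * (N - d))"
    using F4 F5 e by linarith
  then have F6: "2 * f x0 \<le> d - 1 + 2 * (N - d)" using dpos by simp
  have dN: "d < N" using \<open>card U < N\<close> d_def by simp
  have F6': "2 * f x0 + d + 1 \<le> 2 * N" using F6 dN dpos by linarith
  have cX': "N \<le> card X + card S" using cX by linarith
  have cXC': "card (X - C) + c = card X" using cXC cCX by linarith
  show False using F1 F2 F3 F6' cXC' cX' x0(2) dk d_def cS by linarith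
qed


lemma take_mem: "i < n \<Longrightarrow> i < length xs \<Longrightarrow> xs ! i \<in> set (take n xs)"
  by (metis in_set_conv_nth length_take min_less_iff_conj nth_take)

lemma side:
  fixes k l :: nat and V :: "'a set" and E :: "'a \<Rightarrow> 'a \<Rightarrow> bool" and Q :: "nat \<Rightarrow> 'a set"
  assumes tour: "tournament V E"
    and cover: "V = (\<Union>j\<in>{1..l}. Q j)"
    and disj: "\<forall>i\<in>{1..l}. \<forall>j\<in>{1..l}. i \<noteq> j \<longrightarrow> Q i \<inter> Q j = {}"
    and size: "\<forall>j\<in>{1..l}. card (Q j) \<ge> k + 1"
    and enum: "\<forall>j\<in>{1..l}. \<exists>qs. distinct qs \<and> set qs = Q j \<and>
        (\<forall>i < length qs. \<forall>m < length qs. E (qs ! i) (qs ! m) \<longleftrightarrow> (m = i + 1 \<or> i \<ge> m + 2))"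
  shows "\<exists>U U'. U \<subseteq> U' \<and> U' \<subseteq> V \<and> card U \<le> 2 * k * (k + 1) \<and> card U' = l * (k + 1) \<and>
           (\<forall>S. S \<subseteq> V \<and> card S + 1 \<le> k \<longrightarrow>
              (\<forall>v \<in> V - S. \<exists>xs. dpath E ((U' \<union> {v}) - S) xs \<and> hd xs = v \<and> last xs \<in> U))"
proof -
  define P where "P j qs \<longleftrightarrow> distinct qs \<and> set qs = Q j \<and>
        (\<forall>i < length qs. \<forall>m < length qs. E (qs ! i) (qs ! m) \<longleftrightarrow> (m = i + 1 \<or> i \<ge> m + 2))" for j qs
  define qs where "qs j = (SOME qs. P j qs)" for j
  have qsP: "P j (qs j)" if "j \<in> {1..l}" for j
    using enum that unfolding qs_def P_def[symmetric] by (meson someI_ex)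
  have qd: "distinct (qs j)" and qset: "set (qs j) = Q j"
    and qE: "\<And>i m. i < length (qs j) \<Longrightarrow> m < length (qs j) \<Longrightarrow> E (qs j ! i) (qs j ! m) \<longleftrightarrow> (m = i + 1 \<or> i \<ge> m + 2)"
    if "j \<in> {1..l}" for j using qsP[OF that] unfolding P_def by auto
  have len: "length (qs j) = card (Q j)" if "j \<in> {1..l}" for j
    using qd[OF that] qset[OF that] distinct_card by metis
  have finQ: "finite (Q j)" if "j \<in> {1..l}" for j
  proof -
    have "k + 1 \<le> card (Q j)" using size that by blast
    then have "0 < card (Q j)" by linarith
    then show ?thesis by (rule card_ge_0_finite)
  qed
  have finV: "finite V" using cover finQ by auto
  define A where "A j = set (take (k + 1) (qs j))" for j
  have cA: "card (A j) = k + 1" if "j \<in> {1..l}" for j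
  proof -
    have "card (A j) = length (take (k + 1) (qs j))"
      unfolding A_def using qd[OF that] by (intro distinct_card) auto
    then show ?thesis using len[OF that] size that by auto
  qed
  have AQ: "A j \<subseteq> Q j" if "j \<in> {1..l}" for j
    unfolding A_def using qset[OF that] set_take_subset by metis
  define U' where "U' = (\<Union>j\<in>{1..l}. A j)"
  have U'V: "U' \<subseteq> V" unfolding U'_def cover using AQ by blast
  have cU': "card U' = l * (k + 1)"
  proof -
    have "card U' = (\<Sum>j\<in>{1..l}. card (A j))" unfolding U'_def
    proof (rule card_UN_disjoint)
      show "finite {1..l}" by simp
      show "\<forall>i\<in>{1..l}. finite (A i)" by (simp add: A_def)
      show "\<forall>i\<in>{1..l}. \<forall>j\<in>{1..l}. i \<noteq> j \<longrightarrow> A i \<inter> A j = {}" using disj AQ by blast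
    qed
    also have "\<dots> = (\<Sum>j\<in>{1..l}. k + 1)" using cA by simp
    finally show ?thesis by simp
  qed
  have finU': "finite U'" using U'V finV finite_subset by blast
  obtain U where U: "U \<subseteq> U'" "card U = min (card U') (4 * k)"
    "\<forall>x\<in>U' - U. \<forall>u\<in>U. card {y\<in>U'. E y x} \<le> card {y\<in>U'. E y u}"
    using top_subset[OF finU', of "min (card U') (4 * k)" "\<lambda>x. card {y\<in>U'. E y x}"] by auto
  have "4 * k \<le> 2 * k * (k + 1)" by (cases k) auto
  moreover have "card U \<le> 4 * k" using U(2) by simp
  ultimately have cU: "card U \<le> 2 * k * (k + 1)" by linarith
  have main: "\<forall>S. S \<subseteq> V \<and> card S + 1 \<le> k \<longrightarrow>
              (\<forall>v \<in> V - S. \<exists>xs. dpath E ((U' \<union> {v}) - S) xs \<and> hd xs = v \<and> last xs \<in> U)"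
  proof (intro allI impI ballI)
    fix S v assume S: "S \<subseteq> V \<and> card S + 1 \<le> k" and v: "v \<in> V - S"
    have finS: "finite S" using S finV finite_subset by blast
    obtain a where a: "a \<in> U' - S" "v = a \<or> (v \<notin> U' \<and> E v a)"
    proof (cases "v \<in> U'")
      case True
      have "v \<in> U' - S" using True v by blast
      then show ?thesis using that by blast
    next
      case False
      obtain j where j: "j \<in> {1..l}" "v \<in> Q j" using v cover by blast
      then have "v \<in> set (qs j)" using qset[OF j(1)] by simp
      then obtain i where i: "i < length (qs j)" "qs j ! i = v" by (auto simp: in_set_conv_nth)
      have ik: "i \<ge> k + 1"
      proof (rule ccontr)
        assume "\<not> ?thesis"
        then have "v \<in> A j" unfolding A_def using take_mem[of i "k+1" "qs j"] i by simp
        then show False using False j unfolding U'_def by blast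
      qed
      define B where "B = (\<lambda>m. qs j ! m) ` {..<k}"
      have "inj_on (\<lambda>m. qs j ! m) {..<k}"
        using qd[OF j(1)] i ik by (auto simp: inj_on_def nth_eq_iff_index_eq)
      then have cB: "card B = k" unfolding B_def by (simp add: card_image)
      have "\<not> B \<subseteq> S"
      proof
        assume "B \<subseteq> S"
        then have "card B \<le> card S" using finS card_mono by blast
        then show False using cB S by simp
      qed
      then obtain m where m: "m < k" "qs j ! m \<notin> S" unfolding B_def by auto
      have mA: "qs j ! m \<in> A j" unfolding A_def using take_mem[of m "k+1" "qs j"] m i ik by simp
      have "E v (qs j ! m)" using qE[OF j(1) i(1), of m] i m ik by simp
      moreover have "qs j ! m \<in> U'" using mA j unfolding U'_def by blast
      ultimately show ?thesis using that[of "qs j ! m"] m False by blast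
    qed
    obtain b where b: "b \<in> U" "(\<lambda>x y. E x y \<and> x \<in> U' - S \<and> y \<in> U' - S)\<^sup>*\<^sup>* a b"
    proof -
      have "S \<subseteq> V" "card S + 1 \<le> k" using S by auto
      from key[OF tour finV U'V U(1) U(2) U(3) this a(1)] show ?thesis using that by blast
    qed
    obtain p where p: "dpath E (U' - S) p" "hd p = a" "last p = b"
      using reach_path[OF b(2) a(1)] by blast
    have pX: "dpath E ((U' \<union> {v}) - S) p" by (rule dpath_mono[OF p(1)]) blast
    show "\<exists>xs. dpath E ((U' \<union> {v}) - S) xs \<and> hd xs = v \<and> last xs \<in> U"
    proof (cases "v = a")
      case True then show ?thesis using pX p b by blast
    next
      case False
      then have va: "v \<notin> U'" "E v a" using a by auto
      have ne: "p \<noteq> []" using p unfolding dpath_def by auto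
      have "v \<notin> set p" using p(1) va unfolding dpath_def by auto
      moreover have "v \<in> (U' \<union> {v}) - S" using v by blast
      moreover have "E v (hd p)" using va p by simp
      ultimately have "dpath E ((U' \<union> {v}) - S) (v # p)" using dpath_Cons[OF pX] by blast
      then show ?thesis using ne p b by (intro exI[of _ "v # p"]) auto
    qed
  qed
  then show ?thesis using U U'V cU cU' by blast
qed

theorem lemma2p7:
  fixes k l :: nat and V :: "'a set" and E :: "'a \<Rightarrow> 'a \<Rightarrow> bool" and Q :: "nat \<Rightarrow> 'a set"
  assumes tour: "tournament V E"
    and cover: "V = (\<Union>j\<in>{1..l}. Q j)"
    and disj: "\<forall>i\<in>{1..l}. \<forall>j\<in>{1..l}. i \<noteq> j \<longrightarrow> Q i \<inter> Q j = {}"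
    and size: "\<forall>j\<in>{1..l}. card (Q j) \<ge> k + 1"
    and btp: "\<forall>j\<in>{1..l}. bt_path E (Q j)"
  shows "\<exists>U W U' W'. U \<subseteq> U' \<and> U' \<subseteq> V \<and> W \<subseteq> W' \<and> W' \<subseteq> V \<and>
           card U \<le> 2 * k * (k + 1) \<and> card W \<le> 2 * k * (k + 1) \<and>
           card U' = l * (k + 1) \<and> card W' = l * (k + 1) \<and>
           (\<forall>S. S \<subseteq> V \<and> card S + 1 \<le> k \<longrightarrow>
              (\<forall>v \<in> V - S.
                 (\<exists>xs. dpath E ((U' \<union> {v}) - S) xs \<and> hd xs = v \<and> last xs \<in> U) \<and>
                 (\<exists>xs. dpath E ((W' \<union> {v}) - S) xs \<and> hd xs \<in> W \<and> last xs = v)))"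
proof -
  have enum: "\<forall>j\<in>{1..l}. \<exists>qs. distinct qs \<and> set qs = Q j \<and>
        (\<forall>i < length qs. \<forall>m < length qs. E (qs ! i) (qs ! m) \<longleftrightarrow> (m = i + 1 \<or> i \<ge> m + 2))"
    using btp unfolding bt_path_def by blast
  obtain U U' where UU: "U \<subseteq> U'" "U' \<subseteq> V" "card U \<le> 2 * k * (k + 1)" "card U' = l * (k + 1)"
    "\<forall>S. S \<subseteq> V \<and> card S + 1 \<le> k \<longrightarrow>
              (\<forall>v \<in> V - S. \<exists>xs. dpath E ((U' \<union> {v}) - S) xs \<and> hd xs = v \<and> last xs \<in> U)"
    using side[OF tour cover disj size enum] by (elim exE conjE) (rule that; assumption)
  define E' where "E' = (\<lambda>x y. E y x)"
  have tour': "tournament V E'" using tour unfolding tournament_def E'_def by metis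
  have enum': "\<forall>j\<in>{1..l}. \<exists>qs. distinct qs \<and> set qs = Q j \<and>
        (\<forall>i < length qs. \<forall>m < length qs. E' (qs ! i) (qs ! m) \<longleftrightarrow> (m = i + 1 \<or> i \<ge> m + 2))"
  proof
    fix j assume j: "j \<in> {1..l}"
    then obtain qs where q: "distinct qs" "set qs = Q j"
      "\<forall>i < length qs. \<forall>m < length qs. E (qs ! i) (qs ! m) \<longleftrightarrow> (m = i + 1 \<or> i \<ge> m + 2)"
      using enum by blast
    show "\<exists>qs. distinct qs \<and> set qs = Q j \<and>
        (\<forall>i < length qs. \<forall>m < length qs. E' (qs ! i) (qs ! m) \<longleftrightarrow> (m = i + 1 \<or> i \<ge> m + 2))"
    proof (intro exI[of _ "rev qs"] conjI allI impI)
      show "distinct (rev qs)" "set (rev qs) = Q j" using q by auto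
      fix i m assume i: "i < length (rev qs)" and m: "m < length (rev qs)"
      have "E' (rev qs ! i) (rev qs ! m) = E (qs ! (length qs - Suc m)) (qs ! (length qs - Suc i))"
        using i m by (simp add: rev_nth E'_def)
      also have "\<dots> = (length qs - Suc i = length qs - Suc m + 1 \<or> length qs - Suc m \<ge> length qs - Suc i + 2)"
        using q(3) i m by simp
      also have "\<dots> = (m = i + 1 \<or> i \<ge> m + 2)" using i m by simp arith
      finally show "E' (rev qs ! i) (rev qs ! m) = (m = i + 1 \<or> i \<ge> m + 2)" .
    qed
  qed
  obtain W W' where WW: "W \<subseteq> W'" "W' \<subseteq> V" "card W \<le> 2 * k * (k + 1)" "card W' = l * (k + 1)"
    "\<forall>S. S \<subseteq> V \<and> card S + 1 \<le> k \<longrightarrow>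
              (\<forall>v \<in> V - S. \<exists>xs. dpath E' ((W' \<union> {v}) - S) xs \<and> hd xs = v \<and> last xs \<in> W)"
    using side[OF tour' cover disj size enum'] by (elim exE conjE) (rule that; assumption)
  have main: "\<forall>S. S \<subseteq> V \<and> card S + 1 \<le> k \<longrightarrow>
              (\<forall>v \<in> V - S.
                 (\<exists>xs. dpath E ((U' \<union> {v}) - S) xs \<and> hd xs = v \<and> last xs \<in> U) \<and>
                 (\<exists>xs. dpath E ((W' \<union> {v}) - S) xs \<and> hd xs \<in> W \<and> last xs = v))"
  proof (intro allI impI ballI conjI)
    fix S v assume S: "S \<subseteq> V \<and> card S + 1 \<le> k" and v: "v \<in> V - S"
    show "\<exists>xs. dpath E ((U' \<union> {v}) - S) xs \<and> hd xs = v \<and> last xs \<in> U" using UU(5) S v by blast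
    obtain xs where xs: "dpath E' ((W' \<union> {v}) - S) xs" "hd xs = v" "last xs \<in> W"
      using WW(5) S v by blast
    have ne: "xs \<noteq> []" using xs unfolding dpath_def by auto
    have "dpath E ((W' \<union> {v}) - S) (rev xs)" using dpath_rev xs(1) unfolding E'_def by blast
    then show "\<exists>xs. dpath E ((W' \<union> {v}) - S) xs \<and> hd xs \<in> W \<and> last xs = v"
      using xs ne by (intro exI[of _ "rev xs"]) (auto simp: hd_rev last_rev)
  qed
  show ?thesis
    apply (rule exI[of _ U], rule exI[of _ W], rule exI[of _ U'], rule exI[of _ W'])
    using UU(1-4) WW(1-4) main by blast
qed

end
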